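(* Let $n\ge 1$ and $m\ge 2$ be integers with $m\nmid n$, let $t$ be an integer with $m\mid t$, let $k,s$ be nonnegative integers, and let $f=\sum_{i=0}^{k}a_i\theta_{m,i}$ and $g=\theta_{m,0}+\sum_{j=1}^{s}b_j\theta_{m,j}$ with $a_i,b_j\in\mathbb{F}_2$. Then $$(S^t\circ f)\odot\bigodot_{v\in\{1,2,\dots,m-1\}}\left(S^{t-v}\circ g+\mathbf{1}\right)=S^{t-m}\circ\left(\sum_{i=0}^{k}a_i\theta_{m,i+1}\right).$$
   Context: For $x=(x_0,\dots,x_{n-1})\in\mathbb{F}_2^n$, indices are taken modulo $n$. $S$ is the cyclic left shift $S(x_0,\dots,x_{n-1})=(x_1,\dots,x_{n-1},x_0)$; $S^i$ denotes its $i$-th power for any integer $i$ (so $S^n$ is the identity and negative powers are powers of the inverse). Maps $\mathbb{F}_2^n\to\mathbb{F}_2^n$ are added pointwise, composed by $\circ$, and multiplied by the Hadamard product $(f\odot g)(x)=(f_0(x)g_0(x),\dots,f_{n-1}(x)g_{n-1}(x))$ where $f_i,g_i$ are coordinate functions; $\bigodot$ denotes an iterated Hadamard product. $\mathbf{1}$ denotes the constant map with value $(1,\dots,1)$. For a nonnegative integer $k$, $\theta_{m,k}\colon\mathbb{F}_2^n\to\mathbb{F}_2^n$ is defined by $\theta_{m,k}(x)=y$ with $y_i=x_{i+mk}\prod_{1\le j\le mk-1,\ m\nmid j}(x_{i+j}+1)$; equivalently $\theta_{m,k}=S^{mk}\odot\bigodot_{1\le j\le mk-1,\,m\nmid j}(S^j+\mathbf{1})$,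 and $\theta_{m,0}$ is the identity map. *)

theory Defs
  imports Main "HOL-Library.Z2"
begin

text \<open>Vectors of F_2^n are modelled as functions nat => bit (bit = the field F_2),
  of which only the coordinates 0..n-1 are meaningful; indices are reduced mod n.\<close>

definition shiftv :: "nat \<Rightarrow> int \<Rightarrow> (nat \<Rightarrow> bit) \<Rightarrow> (nat \<Rightarrow> bit)" where
  "shiftv n i x = (\<lambda>j. x (nat ((int j + i) mod int n)))"

definition theta :: "nat \<Rightarrow> nat \<Rightarrow> nat \<Rightarrow> (nat \<Rightarrow> bit) \<Rightarrow> (nat \<Rightarrow> bit)" where
  "theta n m k x = (\<lambda>j. x ((j + m * k) mod n) *
      (\<Prod>l\<in>{l. 1 \<le> l \<and> l \<le> m * k - 1 \<and> \<not> m dvd l}. x ((j + l) mod n) + 1))"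

end

theory Submission
  imports Defs
begin

definition Aset :: "nat \<Rightarrow> nat \<Rightarrow> nat set" where
  "Aset m k = {l. 1 \<le> l \<and> l \<le> m * k - 1 \<and> \<not> m dvd l}"

lemma finite_Aset[simp]: "finite (Aset m k)"
  unfolding Aset_def by (rule finite_subset[of _ "{..m*k}"]) auto

lemma theta_alt: "theta n m k x j = x ((j + m * k) mod n) *
      (\<Prod>l\<in>Aset m k. x ((j + l) mod n) + 1)"
  unfolding theta_def Aset_def by simp

lemma theta_cong_mod:
  assumes "a mod n = b mod n"
  shows "theta n m k x a = theta n m k x b"
proof -
  have "\<And>c. (a + c) mod n = (b + c) mod n" using assms by (metis mod_add_cong)
  then show ?thesis unfolding theta_def by simp
qed

lemma bit_plus1_ne0: "((y::bit) + 1 \<noteq> 0) = (y = 0)"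
  by (cases y) simp_all

lemma theta_one:
  assumes "theta n m k x j = 1"
  shows "x ((j + m * k) mod n) = 1" "\<And>l. l \<in> Aset m k \<Longrightarrow> x ((j + l) mod n) = 0"
proof -
  have ne: "theta n m k x j \<noteq> 0" using assms by simp
  then show "x ((j + m * k) mod n) = 1" unfolding theta_alt by auto
  fix l assume "l \<in> Aset m k"
  with ne show "x ((j + l) mod n) = 0" unfolding theta_alt
    by (auto simp: bit_plus1_ne0)
qed

lemma core:
  assumes ti: "theta n m i x (P + m) = 1" and u: "1 \<le> u" "u < m" and l: "1 \<le> l"
  shows "theta n m l x (P + u) = 0"
proof (rule ccontr)
  assume "theta n m l x (P + u) \<noteq> 0"
  then have tl: "theta n m l x (P + u) = 1" by simp
  note A = theta_one[OF ti] and B = theta_one[OF tl]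
  have ndvd: "\<not> m dvd (u + m * c)" for c
  proof
    assume "m dvd (u + m * c)"
    then have "m dvd u" by (simp add: dvd_add_left_iff)
    with u show False using nat_dvd_not_less by auto
  qed
  show False
  proof (cases "l \<le> i")
    case True
    define l' where "l' = u + m * (l - 1)"
    have e: "u + m * l = m + l'" using l unfolding l'_def
      by (cases l) (auto simp: algebra_simps)
    have "m * l \<le> m * i" using True by simp
    then have "l' \<le> m * i - 1" using u l unfolding l'_def
      by (cases l) (auto simp: algebra_simps)
    then have "l' \<in> Aset m i" unfolding Aset_def l'_def using u ndvd by auto
    then have "x ((P + m + l') mod n) = 0" using A(2) by blast
    moreover have "x ((P + u + m * l) mod n) = 1" using B(1) .
    ultimately show False using e by (simp add: add.assoc)
  next
    case False
    define l' where "l' = m - u + m * i"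
    have e: "u + l' = m + m * i" using u unfolding l'_def by simp
    have "m * (i + 1) \<le> m * l" using False by (intro mult_le_mono2) simp
    then have "l' \<le> m * l - 1" using u unfolding l'_def by (simp add: algebra_simps)
    moreover have "\<not> m dvd l'"
    proof
      assume "m dvd l'"
      then have "m dvd (l' + u)" if "m dvd (l' + u)" using that by simp
      have "m dvd (l' + u)" using e by (simp add: add.commute)
      with \<open>m dvd l'\<close> have "m dvd u" by (simp add: dvd_add_right_iff)
      with u show False using nat_dvd_not_less by auto
    qed
    ultimately have "l' \<in> Aset m l" unfolding Aset_def l'_def using u by auto
    then have "x ((P + u + l') mod n) = 0" using B(2) by blast
    moreover have "x ((P + m + m * i) mod n) = 1" using A(1) .
    ultimately show False using e by (simp add: add.assoc)
  qed
qed

lemma Aset_Suc: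
  assumes "m \<ge> 2"
  shows "Aset m (i + 1) = {1..m-1} \<union> (\<lambda>l. l + m) ` Aset m i"
proof (intro set_eqI iffI)
  fix l assume "l \<in> Aset m (i + 1)"
  then have l: "1 \<le> l" "l \<le> m * i + m - 1" "\<not> m dvd l" unfolding Aset_def
    by (auto simp: algebra_simps)
  show "l \<in> {1..m-1} \<union> (\<lambda>l. l + m) ` Aset m i"
  proof (cases "l < m")
    case True then show ?thesis using l by auto
  next
    case False
    then have "l \<noteq> m" using l by auto
    with False have "l > m" by simp
    moreover have "\<not> m dvd (l - m)" using l(3) False
      by (metis dvd_minus_self le_add_diff_inverse2 not_le dvd_add_right_iff)
    ultimately have "l - m \<in> Aset m i" using l unfolding Aset_def by auto
    moreover have "l = (l - m) + m" using False by simp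
    ultimately show ?thesis by blast
  qed
next
  fix l assume "l \<in> {1..m-1} \<union> (\<lambda>l. l + m) ` Aset m i"
  then show "l \<in> Aset m (i + 1)"
  proof
    assume "l \<in> {1..m-1}"
    then have "1 \<le> l" "l < m" using assms by auto
    moreover have "m \<le> m * (i + 1)" by simp
    ultimately show ?thesis unfolding Aset_def using nat_dvd_not_less by auto
  next
    assume "l \<in> (\<lambda>l. l + m) ` Aset m i"
    then obtain l0 where l0: "l0 \<in> Aset m i" "l = l0 + m" by auto
    then have "1 \<le> l0" "l0 \<le> m * i - 1" "\<not> m dvd l0" unfolding Aset_def by auto
    moreover have "\<not> m dvd (l0 + m)" using \<open>\<not> m dvd l0\<close> by simp
    ultimately show ?thesis using l0(2) unfolding Aset_def by (auto simp: algebra_simps)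
  qed
qed

lemma theta_Suc:
  assumes "m \<ge> 2"
  shows "theta n m (i + 1) x P = theta n m i x (P + m) * (\<Prod>u\<in>{1..m-1}. x ((P + u) mod n) + 1)"
proof -
  have disj: "{1..m-1} \<inter> (\<lambda>l. l + m) ` Aset m i = {}" by auto
  have "(\<Prod>l\<in>Aset m (i+1). x ((P + l) mod n) + 1)
      = (\<Prod>u\<in>{1..m-1}. x ((P + u) mod n) + 1) * (\<Prod>l\<in>(\<lambda>l. l + m) ` Aset m i. x ((P + l) mod n) + 1)"
    unfolding Aset_Suc[OF assms] by (rule prod.union_disjoint) (auto simp: disj)
  also have "(\<Prod>l\<in>(\<lambda>l. l + m) ` Aset m i. x ((P + l) mod n) + 1) = (\<Prod>l\<in>Aset m i. x ((P + m + l) mod n) + 1)"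
    by (subst prod.reindex) (auto simp: inj_on_def algebra_simps)
  finally show ?thesis unfolding theta_alt by (simp add: algebra_simps)
qed


lemma mod_shift_nat:
  assumes "n \<ge> (1::nat)"
  shows "nat ((z + int c) mod int n) mod n = (nat (z mod int n) + c) mod n"
proof -
  have np: "int n > 0" using assms by simp
  have "int (nat ((z + int c) mod int n) mod n) = (z + int c) mod int n mod int n"
    using np by (simp add: of_nat_mod)
  also have "\<dots> = (z mod int n + int c) mod int n" by (simp add: mod_add_left_eq)
  also have "\<dots> = int ((nat (z mod int n) + c) mod n)" using np by (simp add: of_nat_mod)
  finally show ?thesis by simp
qed

lemma theta0: "theta n m 0 x j = x (j mod n)"
  unfolding theta_alt Aset_def by simp

lemma prod_flip:
  "(\<Prod>v\<in>{1..m-1}. h (m - v)) = (\<Prod>u\<in>{1..m-1::nat}. (h u :: bit))"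
  by (rule prod.reindex_bij_witness[where i="\<lambda>u. m - u" and j="\<lambda>v. m - v"]) auto

theorem lemma3:
  fixes n m k s :: nat and t :: int and a b :: "nat \<Rightarrow> bit"
    and f g :: "(nat \<Rightarrow> bit) \<Rightarrow> (nat \<Rightarrow> bit)"
  assumes "n \<ge> 1" and "m \<ge> 2" and "\<not> m dvd n" and "int m dvd t"
    and "f = (\<lambda>x j. \<Sum>i\<le>k. a i * theta n m i x j)"
    and "g = (\<lambda>x j. theta n m 0 x j + (\<Sum>l\<in>{1..s}. b l * theta n m l x j))"
  shows "\<forall>x. \<forall>j<n.
    shiftv n t (f x) j * (\<Prod>v\<in>{1..m-1}. shiftv n (t - int v) (g x) j + 1)
      = shiftv n (t - int m) (\<lambda>j'. \<Sum>i\<le>k. a i * theta n m (i + 1) x j') j"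
proof (intro allI impI)
  fix x j assume "j < n"
  define z where "z = int j + (t - int m)"
  define P where "P = nat (z mod int n)"
  have fcong: "f x J = f x J'" if "J mod n = J' mod n" for J J'
    unfolding assms(5) using theta_cong_mod[OF that] by simp
  have gcong: "g x J = g x J'" if "J mod n = J' mod n" for J J'
    unfolding assms(6) using theta_cong_mod[OF that] by simp
  have e1: "shiftv n t (f x) j = f x (P + m)"
  proof -
    have "int j + t = z + int m" unfolding z_def by simp
    then have "nat ((int j + t) mod int n) mod n = (P + m) mod n"
      using mod_shift_nat[OF assms(1), of z m] unfolding P_def by simp
    then show ?thesis unfolding shiftv_def by (rule fcong)
  qed
  have e2: "shiftv n (t - int v) (g x) j = g x (P + (m - v))" if "v \<in> {1..m-1}" for v
  proof -
    have "int j + (t - int v) = z + int (m - v)" using that unfolding z_def by auto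
    then have "nat ((int j + (t - int v)) mod int n) mod n = (P + (m - v)) mod n"
      using mod_shift_nat[OF assms(1), of z "m - v"] unfolding P_def by simp
    then show ?thesis unfolding shiftv_def by (rule gcong)
  qed
  have e3: "shiftv n (t - int m) h j = h P" for h unfolding shiftv_def P_def z_def by simp
  have tm: "theta n m i x (P + m) * (\<Prod>v\<in>{1..m-1}. g x (P + (m - v)) + 1)
      = theta n m (i + 1) x P" for i
  proof (cases "theta n m i x (P + m) = 0")
    case True
    then show ?thesis unfolding theta_Suc[OF assms(2)] by simp
  next
    case False
    then have ti: "theta n m i x (P + m) = 1" by simp
    have gx: "g x (P + u) = x ((P + u) mod n)" if "u \<in> {1..m-1}" for u
    proof -
      have "theta n m l x (P + u) = 0" if "l \<in> {1..s}" for l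
        using core[OF ti, of u l] that \<open>u \<in> {1..m-1}\<close> by auto
      then show ?thesis unfolding assms(6) by (simp add: theta0)
    qed
    have "(\<Prod>v\<in>{1..m-1}. g x (P + (m - v)) + 1) = (\<Prod>u\<in>{1..m-1}. g x (P + u) + 1)"
      by (rule prod_flip)
    also have "\<dots> = (\<Prod>u\<in>{1..m-1}. x ((P + u) mod n) + 1)"
      by (rule prod.cong) (auto simp: gx)
    finally show ?thesis unfolding theta_Suc[OF assms(2)] by simp
  qed
  have "shiftv n t (f x) j * (\<Prod>v\<in>{1..m-1}. shiftv n (t - int v) (g x) j + 1)
      = f x (P + m) * (\<Prod>v\<in>{1..m-1}. g x (P + (m - v)) + 1)"
    using e1 e2 by simp
  also have "\<dots> = (\<Sum>i\<le>k. a i * (theta n m i x (P + m) * (\<Prod>v\<in>{1..m-1}. g x (P + (m - v)) + 1)))"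
    unfolding assms(5) by (simp only: sum_distrib_right mult.assoc)
  also have "\<dots> = (\<Sum>i\<le>k. a i * theta n m (i + 1) x P)"
    using tm by simp
  also have "\<dots> = shiftv n (t - int m) (\<lambda>j'. \<Sum>i\<le>k. a i * theta n m (i + 1) x j') j"
    using e3 by simp
  finally show "shiftv n t (f x) j * (\<Prod>v\<in>{1..m-1}. shiftv n (t - int v) (g x) j + 1)
      = shiftv n (t - int m) (\<lambda>j'. \<Sum>i\<le>k. a i * theta n m (i + 1) x j') j" .
qed

end
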